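(* Let $X$ be an infinite-dimensional II-polyhedral real Banach space. Then $B_X$ does not have slices of arbitrarily small diameter; that is, there exists $\delta>0$ such that every slice of $B_X$ has diameter at least $\delta$.
   Context: All Banach spaces are real. For a Banach space $X$, $B_X$ denotes the closed unit ball, $X^*$ the dual, and $Ext(B_{X^*})$ the set of extreme points of $B_{X^*}$. For a set $A\subseteq X^*$, $A'$ denotes the set of accumulation points of $A$ in the weak$^*$ topology of $X^*$. $X$ is called II-polyhedral if there exists $0<r<1$ such that $(Ext B_{X^*})'\subseteq rB_{X^*}$. A slice of $B_X$ is a set of the form $S(B_X,f,\alpha)=\{x\in B_X: f(x)>\|f\|-\alpha\}$ with $f\in X^*\setminus\{0\}$ and $\alpha>0$. *)

theory Defs
  imports "HOL-Analysis.Analysis"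
begin

definition weak_star_topology :: "('a::real_normed_vector \<Rightarrow>\<^sub>L real) topology" where
  "weak_star_topology = topology_generated_by
     {{g. blinfun_apply g x \<in> U} | x U. open (U :: real set)}"

definition ext_dual_ball :: "('a::real_normed_vector \<Rightarrow>\<^sub>L real) set" where
  "ext_dual_ball = {f. f extreme_point_of cball 0 1}"

definition II_polyhedral :: "'a::real_normed_vector itself \<Rightarrow> bool" where
  "II_polyhedral (TYPE('a)) \<longleftrightarrow>
     (\<exists>r::real. 0 < r \<and> r < 1 \<and>
        weak_star_topology derived_set_of (ext_dual_ball :: ('a \<Rightarrow>\<^sub>L real) set) \<subseteq> cball 0 r)"

definition slice :: "('a::real_normed_vector \<Rightarrow>\<^sub>L real) \<Rightarrow> real \<Rightarrow> 'a set" where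
  "slice f \<alpha> = {x \<in> cball 0 1. blinfun_apply f x > norm f - \<alpha>}"

end

theory Submission
  imports Defs
begin


lemma zorn_min:
  fixes A :: "'b::order set"
  assumes ne: "A \<noteq> {}"
    and ch: "\<And>C. C \<subseteq> A \<Longrightarrow> C \<noteq> {} \<Longrightarrow> (\<forall>a\<in>C. \<forall>b\<in>C. a \<le> b \<or> b \<le> a) \<Longrightarrow> \<exists>u\<in>A. \<forall>a\<in>C. u \<le> a"
  shows "\<exists>m\<in>A. \<forall>a\<in>A. a \<le> m \<longrightarrow> a = m"
proof -
  have po: "partial_order_on A (relation_of (\<lambda>a b. b \<le> a) A)"
    by (rule partial_order_on_relation_ofI) auto
  have "\<exists>m\<in>A. \<forall>a\<in>A. (\<lambda>a b. b \<le> a) m a \<longrightarrow> a = m"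
  proof (rule predicate_Zorn[OF po])
    fix C assume C: "C \<in> Chains (relation_of (\<lambda>a b. b \<le> a) A)"
    then have sub: "C \<subseteq> A" by (rule Chains_relation_of)
    have cmp: "\<forall>a\<in>C. \<forall>b\<in>C. a \<le> b \<or> b \<le> a"
      using C unfolding Chains_def relation_of_def by blast
    show "\<exists>u\<in>A. \<forall>a\<in>C. (\<lambda>a b. b \<le> a) a u"
    proof (cases "C = {}")
      case True then show ?thesis using ne by auto
    next
      case False then show ?thesis using ch[OF sub False cmp] by auto
    qed
  qed
  then show ?thesis by auto
qed

definition sublin :: "('a::real_vector \<Rightarrow> real) \<Rightarrow> bool" where
  "sublin p \<longleftrightarrow> (\<forall>x y. p (x + y) \<le> p x + p y) \<and> (\<forall>c x. 0 \<le> c \<longrightarrow> p (c *\<^sub>R x) = c * p x)"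

lemma sublin_0: "sublin p \<Longrightarrow> p 0 = 0"
  unfolding sublin_def by (metis mult_zero_left order_refl scaleR_zero_left)

lemma sublin_neg: "sublin p \<Longrightarrow> - p (- x) \<le> p x"
proof -
  assume s: "sublin p"
  have "p (x + - x) \<le> p x + p (-x)" using s unfolding sublin_def by blast
  then show ?thesis using sublin_0[OF s] by simp
qed

definition shift :: "('a::real_vector \<Rightarrow> real) \<Rightarrow> 'a \<Rightarrow> 'a \<Rightarrow> real" where
  "shift q y x = Inf ((\<lambda>t. q (x + t *\<^sub>R y) - t * q y) ` {0..})"

lemma shift_bdd:
  assumes s: "sublin q"
  shows "bdd_below ((\<lambda>t. q (x + t *\<^sub>R y) - t * q y) ` {0..})"
proof (rule bdd_belowI2)
  fix t :: real assume t: "t \<in> {0..}"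
  have "q (t *\<^sub>R y) \<le> q (x + t *\<^sub>R y) + q (- x)"
  proof -
    have "t *\<^sub>R y = (x + t *\<^sub>R y) + (- x)" by simp
    then show ?thesis using s unfolding sublin_def by metis
  qed
  moreover have "q (t *\<^sub>R y) = t * q y" using s t unfolding sublin_def by auto
  ultimately show "- q (- x) \<le> q (x + t *\<^sub>R y) - t * q y" by linarith
qed

lemma shift_le:
  assumes s: "sublin q" and t: "0 \<le> t"
  shows "shift q y x \<le> q (x + t *\<^sub>R y) - t * q y"
  unfolding shift_def by (rule cInf_lower[OF _ shift_bdd[OF s]]) (use t in auto)

lemma shift_ge:
  assumes "\<And>t. 0 \<le> t \<Longrightarrow> m \<le> q (x + t *\<^sub>R y) - t * q y"
  shows "m \<le> shift q y x"
  unfolding shift_def by (rule cInf_greatest) (use assms in auto)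

lemma shift_sublin:
  assumes s: "sublin q"
  shows "sublin (shift q y)"
  unfolding sublin_def
proof (intro conjI allI impI)
  fix x x' :: 'a
  have key: "shift q y (x + x') - (q (x' + t' *\<^sub>R y) - t' * q y) \<le> shift q y x"
    if t': "0 \<le> t'" for t'
  proof (rule shift_ge)
    fix t :: real assume t: "0 \<le> t"
    have "shift q y (x + x') \<le> q ((x + x') + (t + t') *\<^sub>R y) - (t + t') * q y"
      using shift_le[OF s] t t' by auto
    also have "q ((x + x') + (t + t') *\<^sub>R y) \<le> q (x + t *\<^sub>R y) + q (x' + t' *\<^sub>R y)"
    proof -
      have "(x + x') + (t + t') *\<^sub>R y = (x + t *\<^sub>R y) + (x' + t' *\<^sub>R y)"
        by (simp add: algebra_simps)
      show ?thesis unfolding \<open>(x + x') + (t + t') *\<^sub>R y = (x + t *\<^sub>R y) + (x' + t' *\<^sub>R y)\<close>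
        using s unfolding sublin_def by blast
    qed
    finally show "shift q y (x + x') - (q (x' + t' *\<^sub>R y) - t' * q y) \<le> q (x + t *\<^sub>R y) - t * q y"
      by (simp add: algebra_simps)
  qed
  have "shift q y (x + x') - shift q y x \<le> shift q y x'"
  proof (intro shift_ge)
    fix t' :: real assume "0 \<le> t'"
    from key[OF this] show "shift q y (x + x') - shift q y x \<le> q (x' + t' *\<^sub>R y) - t' * q y" by linarith
  qed
  then show "shift q y (x + x') \<le> shift q y x + shift q y x'" by simp
next
  fix c :: real and x :: 'a assume c: "0 \<le> c"
  show "shift q y (c *\<^sub>R x) = c * shift q y x"
  proof (cases "c = 0")
    case True
    have "shift q y 0 = 0"
    proof (rule antisym)
      show "shift q y 0 \<le> 0" using shift_le[OF s, of 0 y 0] sublin_0[OF s] by simp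
      show "0 \<le> shift q y 0"
        by (rule shift_ge) (use s in \<open>simp add: sublin_def\<close>)
    qed
    then show ?thesis using True by simp
  next
    case False
    then have c: "0 < c" using c by simp
    show ?thesis
    proof (rule antisym)
      have "shift q y (c *\<^sub>R x) / c \<le> shift q y x"
      proof (rule shift_ge)
        fix t :: real assume t: "0 \<le> t"
        have "shift q y (c *\<^sub>R x) \<le> q (c *\<^sub>R x + (c * t) *\<^sub>R y) - (c * t) * q y"
          using shift_le[OF s] t c by simp
        also have "q (c *\<^sub>R x + (c * t) *\<^sub>R y) = c * q (x + t *\<^sub>R y)"
        proof -
          have "c *\<^sub>R x + (c * t) *\<^sub>R y = c *\<^sub>R (x + t *\<^sub>R y)" by (simp add: scaleR_add_right)
          then show ?thesis using s c unfolding sublin_def by simp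
        qed
        finally show "shift q y (c *\<^sub>R x) / c \<le> q (x + t *\<^sub>R y) - t * q y"
          using c by (simp add: field_simps)
      qed
      then show "shift q y (c *\<^sub>R x) \<le> c * shift q y x" using c by (simp add: field_simps)
      have "c * shift q y x \<le> q (c *\<^sub>R x + t *\<^sub>R y) - t * q y" if t: "0 \<le> t" for t
      proof -
        have "shift q y x \<le> q (x + (t / c) *\<^sub>R y) - (t / c) * q y"
          using shift_le[OF s, of "t / c" y x] t c by simp
        moreover have "q (c *\<^sub>R x + t *\<^sub>R y) = c * q (x + (t / c) *\<^sub>R y)"
        proof -
          have "c *\<^sub>R x + t *\<^sub>R y = c *\<^sub>R (x + (t / c) *\<^sub>R y)" using c by (simp add: scaleR_add_right)
          then show ?thesis using s c unfolding sublin_def by simp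
        qed
        ultimately show ?thesis using c by (simp add: field_simps)
      qed
      then show "c * shift q y x \<le> shift q y (c *\<^sub>R x)" by (rule shift_ge)
    qed
  qed
qed

lemma shift_below: "sublin q \<Longrightarrow> shift q y x \<le> q x"
  using shift_le[of q 0 y x] by simp

lemma shift_neg: "sublin q \<Longrightarrow> shift q y (- y) \<le> - q y"
  using shift_le[of q 1 y "- y"] sublin_0[of q] by simp



lemma chain_inf_sublin:
  fixes C :: "('a::real_vector \<Rightarrow> real) set"
  assumes sub: "\<forall>q\<in>C. sublin q \<and> q \<le> p" and ne: "C \<noteq> {}"
    and cmp: "\<forall>a\<in>C. \<forall>b\<in>C. a \<le> b \<or> b \<le> a"
  defines "u \<equiv> \<lambda>x. Inf ((\<lambda>q. q x) ` C)"
  shows "sublin u" "\<forall>a\<in>C. u \<le> a"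
proof -
  have bdd: "bdd_below ((\<lambda>q. q x) ` C)" for x
  proof (rule bdd_belowI2)
    fix q assume q: "q \<in> C"
    have "- q (- x) \<le> q x" using sub q sublin_neg by blast
    moreover have "q (- x) \<le> p (- x)" using sub q by (auto simp: le_fun_def)
    ultimately show "- p (- x) \<le> q x" by linarith
  qed
  have low: "u x \<le> q x" if "q \<in> C" for q x
    unfolding u_def by (rule cInf_lower[OF _ bdd]) (use that in auto)
  have gr: "m \<le> u x" if "\<And>q. q \<in> C \<Longrightarrow> m \<le> q x" for m x
    unfolding u_def by (rule cInf_greatest) (use that ne in auto)
  show "\<forall>a\<in>C. u \<le> a" using low by (auto simp: le_fun_def)
  show "sublin u"
    unfolding sublin_def
  proof (intro conjI allI impI)
    fix x y
    have key: "u (x + y) - q2 y \<le> u x" if q2: "q2 \<in> C" for q2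
    proof (rule gr)
      fix q1 assume q1: "q1 \<in> C"
      show "u (x + y) - q2 y \<le> q1 x"
      proof (cases "q1 \<le> q2")
        case True
        have "u (x + y) \<le> q1 (x + y)" using low q1 by blast
        also have "\<dots> \<le> q1 x + q1 y" using sub q1 unfolding sublin_def by blast
        also have "q1 y \<le> q2 y" using True by (auto simp: le_fun_def)
        finally show ?thesis by simp
      next
        case False
        then have "q2 \<le> q1" using cmp q1 q2 by blast
        have "u (x + y) \<le> q2 (x + y)" using low q2 by blast
        also have "\<dots> \<le> q2 x + q2 y" using sub q2 unfolding sublin_def by blast
        also have "q2 x \<le> q1 x" using \<open>q2 \<le> q1\<close> by (auto simp: le_fun_def)
        finally show ?thesis by simp
      qed
    qed
    have "u (x + y) - u x \<le> u y"
      by (rule gr) (use key in force)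
    then show "u (x + y) \<le> u x + u y" by simp
  next
    fix c :: real and x :: 'a assume c: "0 \<le> c"
    show "u (c *\<^sub>R x) = c * u x"
    proof (cases "c = 0")
      case True
      have "u 0 = 0"
      proof (rule antisym)
        obtain q where "q \<in> C" using ne by blast
        then show "u 0 \<le> 0" using low[of q 0] sub sublin_0 by fastforce
        show "0 \<le> u 0" by (rule gr) (use sub sublin_0 in force)
      qed
      then show ?thesis using True by simp
    next
      case False
      then have c: "0 < c" using c by simp
      have hq: "q (c *\<^sub>R x) = c * q x" if "q \<in> C" for q
        using sub that c unfolding sublin_def by auto
      show ?thesis
      proof (rule antisym)
        have "u (c *\<^sub>R x) / c \<le> u x"
        proof (rule gr)
          fix q assume q: "q \<in> C"
          have "u (c *\<^sub>R x) \<le> c * q x" using low[OF q] hq[OF q] by metis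
          then show "u (c *\<^sub>R x) / c \<le> q x" using c by (simp add: field_simps)
        qed
        then show "u (c *\<^sub>R x) \<le> c * u x" using c by (simp add: field_simps)
        show "c * u x \<le> u (c *\<^sub>R x)"
        proof (rule gr)
          fix q assume q: "q \<in> C"
          show "c * u x \<le> q (c *\<^sub>R x)" using low[OF q, of x] hq[OF q] c by simp
        qed
      qed
    qed
  qed
qed

lemma sublin_linear_below:
  fixes p :: "'a::real_vector \<Rightarrow> real"
  assumes p: "sublin p"
  shows "\<exists>q. linear q \<and> (\<forall>x. q x \<le> p x)"
proof -
  define A where "A = {q. sublin q \<and> q \<le> p}"
  have "\<exists>m\<in>A. \<forall>a\<in>A. a \<le> m \<longrightarrow> a = m"
  proof (rule zorn_min)
    show "A \<noteq> {}" using p by (auto simp: A_def)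
    fix C assume C: "C \<subseteq> A" "C \<noteq> {}" "\<forall>a\<in>C. \<forall>b\<in>C. a \<le> b \<or> b \<le> a"
    define u where "u \<equiv> \<lambda>x. Inf ((\<lambda>q. q x) ` C)"
    have sub: "\<forall>q\<in>C. sublin q \<and> q \<le> p" using C(1) by (auto simp: A_def)
    have "sublin u" "\<forall>a\<in>C. u \<le> a"
      using chain_inf_sublin[OF sub C(2) C(3)] unfolding u_def by auto
    moreover obtain q where "q \<in> C" using C(2) by blast
    ultimately have "u \<in> A" using sub unfolding A_def by (auto intro: order_trans)
    then show "\<exists>u\<in>A. \<forall>a\<in>C. u \<le> a" using \<open>\<forall>a\<in>C. u \<le> a\<close> by blast
  qed
  then obtain m where m: "m \<in> A" and mmin: "\<forall>a\<in>A. a \<le> m \<longrightarrow> a = m" by blast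
  have ms: "sublin m" and mp: "m \<le> p" using m by (auto simp: A_def)
  have odd: "m (- y) = - m y" for y
  proof -
    have "shift m y x \<le> p x" for x
    proof -
      have "shift m y x \<le> m x" by (rule shift_below[OF ms])
      also have "m x \<le> p x" using mp by (simp add: le_fun_def)
      finally show ?thesis .
    qed
    then have "shift m y \<in> A" using shift_sublin[OF ms] unfolding A_def le_fun_def by simp
    moreover have "shift m y \<le> m" using shift_below[OF ms] by (auto simp: le_fun_def)
    ultimately have "shift m y = m" using mmin by blast
    then have "m (- y) \<le> - m y" using shift_neg[OF ms, of y] by simp
    moreover have "- m (- y) \<le> m y" using sublin_neg[OF ms] .
    ultimately show ?thesis by linarith
  qed
  have add: "m (x + y) = m x + m y" for x y
  proof -
    have h1: "m (x + y) \<le> m x + m y" using ms unfolding sublin_def by blast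
    have h2: "m (- x + - y) \<le> m (- x) + m (- y)" using ms unfolding sublin_def by blast
    have "- x + - y = - (x + y)" by simp
    then have "- m (x + y) \<le> - m x - m y" using h2 odd[of "x + y"] odd[of x] odd[of y] by simp
    with h1 show ?thesis by linarith
  qed
  have scl: "m (c *\<^sub>R x) = c * m x" for c x
  proof (cases "0 \<le> c")
    case True then show ?thesis using ms unfolding sublin_def by blast
  next
    case False
    then have "m ((- c) *\<^sub>R x) = (- c) * m x" using ms unfolding sublin_def by (simp del: scaleR_minus_left)
    then show ?thesis using odd[of "c *\<^sub>R x"] by simp
  qed
  have "linear m" by (rule linearI) (auto simp: add scl)
  then show ?thesis using mp by (auto simp: le_fun_def)
qed

lemma hahn_banach_norming:
  fixes z :: "'a::real_normed_vector"
  shows "\<exists>g :: 'a \<Rightarrow>\<^sub>L real. norm g \<le> 1 \<and> blinfun_apply g z = norm z"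
proof -
  have sn: "sublin (norm :: 'a \<Rightarrow> real)"
    unfolding sublin_def by (auto simp: norm_triangle_ineq)
  obtain q where q: "linear q" "\<forall>x. q x \<le> shift norm z x"
    using sublin_linear_below[OF shift_sublin[OF sn, of z]] by blast
  have qn: "q x \<le> norm x" for x using q(2) shift_below[OF sn] order_trans by blast
  interpret q: linear q by (rule q(1))
  have absq: "norm (q x) \<le> norm x * 1" for x
    using qn[of x] qn[of "- x"] q.neg by (auto simp: abs_le_iff)
  have bl: "bounded_linear q"
    by (rule bounded_linear_intro[OF q.add q.scale absq])
  define g where "g = Blinfun q"
  have ga: "blinfun_apply g = q" using bl by (simp add: g_def bounded_linear_Blinfun_apply)
  have "norm g \<le> 1" by (rule norm_blinfun_bound) (use absq ga in auto)
  moreover have "q z = norm z"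
  proof -
    have "q (- z) \<le> - norm z" using q(2) shift_neg[OF sn, of z] order_trans by blast
    then show ?thesis using qn[of z] q.neg by simp
  qed
  ultimately show ?thesis using ga by auto
qed



abbreviation PT :: "('a \<Rightarrow> real) topology" where
  "PT \<equiv> product_topology (\<lambda>_. euclideanreal) UNIV"

definition KK :: "('a::real_normed_vector \<Rightarrow> real) set" where
  "KK = {\<phi>. linear \<phi> \<and> (\<forall>x. \<bar>\<phi> x\<bar> \<le> norm x)}"

lemma topspace_PT [simp]: "topspace PT = UNIV"
  by (auto simp: PiE_def extensional_def)

lemma cont_eval: "continuous_map PT euclideanreal (\<lambda>\<phi>. \<phi> x)"
  using continuous_map_product_projection[of x UNIV "\<lambda>_. euclideanreal"] by simp

lemma closedin_PT_pre:
  assumes "continuous_map PT euclideanreal h" "closed C"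
  shows "closedin PT {\<phi>. h \<phi> \<in> C}"
  using closedin_continuous_map_preimage[OF assms(1), of C] assms(2) by simp

lemma closedin_KK: "closedin PT (KK :: ('a::real_normed_vector \<Rightarrow> real) set)"
proof -
  have c1: "closedin PT {\<phi>::'a\<Rightarrow>real. \<phi> (a + b) = \<phi> a + \<phi> b}" for a b
  proof -
    have "{\<phi>::'a\<Rightarrow>real. \<phi> (a + b) = \<phi> a + \<phi> b} = {\<phi>. \<phi> (a + b) - \<phi> a - \<phi> b \<in> {0}}" by auto
    then show ?thesis
      by (simp only:) (intro closedin_PT_pre continuous_map_diff cont_eval closed_singleton)
  qed
  have c2: "closedin PT {\<phi>::'a\<Rightarrow>real. \<phi> (c *\<^sub>R a) = c * \<phi> a}" for c a
  proof -
    have "{\<phi>::'a\<Rightarrow>real. \<phi> (c *\<^sub>R a) = c * \<phi> a} = {\<phi>. \<phi> (c *\<^sub>R a) - c * \<phi> a \<in> {0}}" by auto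
    then show ?thesis
      by (simp only:) (intro closedin_PT_pre continuous_map_diff cont_eval closed_singleton continuous_map_real_mult_left)
  qed
  have c3: "closedin PT {\<phi>::'a\<Rightarrow>real. \<bar>\<phi> a\<bar> \<le> norm a}" for a
  proof -
    have "{\<phi>::'a\<Rightarrow>real. \<bar>\<phi> a\<bar> \<le> norm a} = {\<phi>. \<phi> a \<in> {- norm a..norm a}}" by (auto simp: abs_le_iff)
    then show ?thesis
      by (simp only:) (intro closedin_PT_pre cont_eval closed_atLeastAtMost)
  qed
  have eq: "(KK :: ('a \<Rightarrow> real) set) =
      (\<Inter>p\<in>UNIV. {\<phi>. \<phi> (fst p + snd p) = \<phi> (fst p) + \<phi> (snd p)}) \<inter>
      (\<Inter>p\<in>UNIV. {\<phi>. \<phi> (fst p *\<^sub>R snd p) = fst p * \<phi> (snd p)}) \<inter>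
      (\<Inter>a\<in>UNIV. {\<phi>. \<bar>\<phi> a\<bar> \<le> norm a})"
    unfolding KK_def linear_iff by auto
  show ?thesis
    unfolding eq
    by (intro closedin_Int closedin_Inter) (auto simp: c1 c2 c3)
qed

lemma compactin_KK: "compactin PT (KK :: ('a::real_normed_vector \<Rightarrow> real) set)"
proof -
  have box: "compactin PT (PiE UNIV (\<lambda>x::'a. {- norm x..norm x}))"
    by (simp add: compactin_PiE)
  have "KK \<subseteq> PiE UNIV (\<lambda>x::'a. {- norm x..norm x})"
  proof
    fix \<phi> :: "'a \<Rightarrow> real" assume "\<phi> \<in> KK"
    then have a: "\<bar>\<phi> x\<bar> \<le> norm x" for x by (simp add: KK_def)
    have "\<phi> x \<in> {- norm x..norm x}" for x using a[of x] by auto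
    then show "\<phi> \<in> PiE UNIV (\<lambda>x::'a. {- norm x..norm x})" by auto
  qed
  then have "KK = KK \<inter> PiE UNIV (\<lambda>x::'a. {- norm x..norm x})" by blast
  then show ?thesis using closed_Int_compactin[OF closedin_KK box] by metis
qed

lemma image_ball_KK: "blinfun_apply ` cball (0 :: 'a::real_normed_vector \<Rightarrow>\<^sub>L real) 1 = KK"
proof safe
  fix g :: "'a \<Rightarrow>\<^sub>L real" assume "g \<in> cball 0 1"
  then have n: "norm g \<le> 1" by simp
  have "\<bar>g x\<bar> \<le> norm x" for x
    using norm_blinfun[of g x] n mult_right_mono[OF n, of "norm x"] by simp
  moreover have "linear (blinfun_apply g)"
    using blinfun.bounded_linear_right bounded_linear.linear by blast
  ultimately show "blinfun_apply g \<in> KK" by (simp add: KK_def)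
next
  fix \<phi> :: "'a \<Rightarrow> real" assume "\<phi> \<in> KK"
  then have l: "linear \<phi>" and b: "\<And>x. \<bar>\<phi> x\<bar> \<le> norm x" by (auto simp: KK_def)
  interpret linear \<phi> by (rule l)
  have bl: "bounded_linear \<phi>"
    by (rule bounded_linear_intro[where K=1]) (use b add scale in auto)
  have ga: "blinfun_apply (Blinfun \<phi>) = \<phi>" using bl by (rule bounded_linear_Blinfun_apply)
  have "norm (Blinfun \<phi>) \<le> 1" by (rule norm_blinfun_bound) (use b ga in auto)
  then show "\<phi> \<in> blinfun_apply ` cball 0 1" using ga by (metis mem_cball_0 rev_image_eqI)
qed

lemma weak_open_pre:
  assumes "openin weak_star_topology W"
  shows "\<exists>V. openin PT V \<and> W = {g::'a::real_normed_vector \<Rightarrow>\<^sub>L real. blinfun_apply g \<in> V}"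
proof -
  have "generate_topology_on {{g. blinfun_apply g x \<in> U} | x U. open (U :: real set)} W"
    using assms unfolding weak_star_topology_def openin_topology_generated_by_iff .
  then show ?thesis
  proof (induction rule: generate_topology_on.induct)
    case Empty
    then show ?case by (intro exI[of _ "{}"]) auto
  next
    case (Int a b)
    then obtain Va Vb where "openin PT Va" "a = {g. blinfun_apply g \<in> Va}"
      "openin PT Vb" "b = {g. blinfun_apply g \<in> Vb}" by blast
    then show ?case by (intro exI[of _ "Va \<inter> Vb"]) auto
  next
    case (UN K)
    then have "\<forall>k\<in>K. \<exists>V. openin PT V \<and> k = {g. blinfun_apply g \<in> V}" by blast
    then obtain f where f: "\<forall>k\<in>K. openin PT (f k) \<and> k = {g. blinfun_apply g \<in> f k}"
      by metis
    show ?case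
    proof (intro exI[of _ "\<Union>(f ` K)"] conjI)
      show "openin PT (\<Union>(f ` K))" using f by auto
      show "\<Union>K = {g. blinfun_apply g \<in> \<Union>(f ` K)}"
        using f by blast
    qed
  next
    case (Basis s)
    then obtain x U where s: "s = {g. blinfun_apply g x \<in> U}" "open U" by blast
    have "openin PT {\<phi>. \<phi> x \<in> U}"
      using openin_continuous_map_preimage[OF cont_eval[of x], of U] s(2) by simp
    then show ?case using s by (intro exI[of _ "{\<phi>. \<phi> x \<in> U}"]) auto
  qed
qed

lemma weak_topspace: "topspace (weak_star_topology :: ('a::real_normed_vector \<Rightarrow>\<^sub>L real) topology) = UNIV"
proof -
  have "UNIV \<in> {{g::'a \<Rightarrow>\<^sub>L real. blinfun_apply g x \<in> U} | x U. open (U :: real set)}"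
    by (intro CollectI exI[of _ 0] exI[of _ UNIV]) auto
  then show ?thesis unfolding weak_star_topology_def topology_generated_by_topspace by blast
qed

lemma derived_transfer:
  fixes T :: "('a::real_normed_vector \<Rightarrow>\<^sub>L real) set"
  assumes "blinfun_apply g \<in> PT derived_set_of (blinfun_apply ` T)"
  shows "g \<in> weak_star_topology derived_set_of T"
  unfolding derived_set_of_def weak_topspace
proof (intro CollectI conjI allI impI UNIV_I)
  fix W assume W: "g \<in> W \<and> openin weak_star_topology W"
  then obtain V where V: "openin PT V" "W = {g. blinfun_apply g \<in> V}"
    using weak_open_pre by blast
  then have "blinfun_apply g \<in> V" using W by blast
  then obtain \<psi> where "\<psi> \<noteq> blinfun_apply g" "\<psi> \<in> blinfun_apply ` T" "\<psi> \<in> V"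
    using assms V(1) unfolding derived_set_of_def by blast
  then obtain y where "y \<in> T" "\<psi> = blinfun_apply y" by blast
  moreover have "y \<noteq> g" using \<open>\<psi> = blinfun_apply y\<close> \<open>\<psi> \<noteq> blinfun_apply g\<close> by auto
  moreover have "y \<in> W" using V(2) \<open>\<psi> = blinfun_apply y\<close> \<open>\<psi> \<in> V\<close> by auto
  ultimately show "\<exists>y. y \<noteq> g \<and> y \<in> T \<and> y \<in> W" by blast
qed



lemma inj_bapply: "inj (blinfun_apply :: ('a::real_normed_vector \<Rightarrow>\<^sub>L 'b::real_normed_vector) \<Rightarrow> _)"
  by (simp add: inj_def blinfun_apply_inject)

lemma ext_sub_ball: "(ext_dual_ball :: ('a::real_normed_vector \<Rightarrow>\<^sub>L real) set) \<subseteq> cball 0 1"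
  by (auto simp: ext_dual_ball_def extreme_point_of_def)

lemma eval_le_norm: "norm g \<le> 1 \<Longrightarrow> blinfun_apply g z \<le> norm z"
proof -
  assume n: "norm g \<le> 1"
  have "blinfun_apply g z \<le> norm g * norm z" using norm_blinfun[of g z] by simp
  also have "\<dots> \<le> 1 * norm z" by (rule mult_right_mono[OF n]) simp
  finally show ?thesis by simp
qed

lemma finite_big:
  fixes x :: "'a::real_normed_vector"
  assumes r: "weak_star_topology derived_set_of (ext_dual_ball::('a \<Rightarrow>\<^sub>L real) set) \<subseteq> cball 0 r"
    and x: "norm x \<le> 1" and rs: "r < s"
  shows "finite {e \<in> (ext_dual_ball::('a \<Rightarrow>\<^sub>L real) set). s \<le> blinfun_apply e x}"
proof (rule ccontr)
  define T where "T = {e \<in> (ext_dual_ball::('a \<Rightarrow>\<^sub>L real) set). s \<le> blinfun_apply e x}"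
  assume "infinite {e \<in> (ext_dual_ball::('a \<Rightarrow>\<^sub>L real) set). s \<le> blinfun_apply e x}"
  then have inf: "infinite (blinfun_apply ` T)"
    unfolding T_def using finite_imageD inj_bapply inj_on_subset by (metis subset_UNIV)
  define S where "S = KK \<inter> {\<phi>::'a\<Rightarrow>real. \<phi> x \<in> {s..}}"
  have cS: "compactin PT S"
    unfolding S_def
    by (metis Int_commute closed_Int_compactin closedin_PT_pre compactin_KK cont_eval closed_atLeast)
  have "blinfun_apply ` T \<subseteq> S"
    using ext_sub_ball image_ball_KK unfolding S_def T_def by blast
  then have "S \<inter> PT derived_set_of (blinfun_apply ` T) \<noteq> {}"
    using compactin_imp_Bolzano_Weierstrass[OF cS] inf by blast
  then obtain \<phi> where \<phi>: "\<phi> \<in> S" "\<phi> \<in> PT derived_set_of (blinfun_apply ` T)" by blast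
  then obtain g where g: "g \<in> cball 0 1" "\<phi> = blinfun_apply g"
    using image_ball_KK unfolding S_def by (metis (no_types, lifting) IntD1 imageE)
  have "g \<in> weak_star_topology derived_set_of T"
    using derived_transfer \<phi>(2) g(2) by blast
  moreover have "weak_star_topology derived_set_of T \<subseteq> weak_star_topology derived_set_of ext_dual_ball"
    by (rule derived_set_of_mono) (auto simp: T_def)
  ultimately have "norm g \<le> r" using r by auto
  moreover have "s \<le> blinfun_apply g x" using \<phi>(1) g(2) unfolding S_def by auto
  moreover have "blinfun_apply g x \<le> norm g * norm x" using norm_blinfun[of g x] by simp
  moreover have "norm g * norm x \<le> norm g" using x mult_left_le[of "norm x" "norm g"] by simp
  ultimately show False using rs by linarith
qed

lemma exposed_face:
  fixes S :: "'v::real_vector set" and h :: "'v \<Rightarrow> real" and m :: real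
  assumes S: "convex S" and h: "linear h" and le: "\<forall>x\<in>S. h x \<le> m"
  shows "{x\<in>S. h x = m} face_of S"
  unfolding face_of_def
proof (intro conjI)
  interpret linear h by (rule h)
  show "{x \<in> S. h x = m} \<subseteq> S" by blast
  show "convex {x \<in> S. h x = m}"
    unfolding convex_def
  proof (intro ballI allI impI)
    fix x y and u v :: real assume "x \<in> {x \<in> S. h x = m}" "y \<in> {x \<in> S. h x = m}" and uv: "0 \<le> u" "0 \<le> v" "u + v = 1"
    then have "x \<in> S" "y \<in> S" "h x = m" "h y = m" by auto
    moreover have "h (u *\<^sub>R x + v *\<^sub>R y) = u * h x + v * h y" by (simp add: add scale)
    moreover have "u * m + v * m = m" using uv(3) by (metis distrib_right mult_1)
    ultimately show "u *\<^sub>R x + v *\<^sub>R y \<in> {x \<in> S. h x = m}"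
      using S uv unfolding convex_def by auto
  qed
  show "\<forall>a\<in>S. \<forall>b\<in>S. \<forall>x\<in>{x \<in> S. h x = m}. x \<in> open_segment a b \<longrightarrow> a \<in> {x \<in> S. h x = m} \<and> b \<in> {x \<in> S. h x = m}"
  proof (intro ballI impI)
  fix a b x assume a: "a \<in> S" and b: "b \<in> S" and x: "x \<in> {x \<in> S. h x = m}" and seg: "x \<in> open_segment a b"
  then obtain u where u: "0 < u" "u < 1" "x = (1 - u) *\<^sub>R a + u *\<^sub>R b" by (auto simp: in_segment)
  have hx: "h x = (1 - u) * h a + u * h b" using u(3) by (simp add: add scale)
  have "h a \<le> m" "h b \<le> m" "h x = m" using le a b x by auto
  then have e: "(1 - u) * (m - h a) + u * (m - h b) = 0" using hx by (simp add: algebra_simps)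
  have p1: "0 \<le> (1 - u) * (m - h a)" using u \<open>h a \<le> m\<close> by simp
  have p2: "0 \<le> u * (m - h b)" using u \<open>h b \<le> m\<close> by simp
  have "(1 - u) * (m - h a) = 0" "u * (m - h b) = 0" using e p1 p2 by linarith+
  then have "h a = m \<and> h b = m" using u by auto
  then show "a \<in> {x \<in> S. h x = m} \<and> b \<in> {x \<in> S. h x = m}" using a b by auto
  qed
qed

lemma linear_eval: "linear (\<lambda>g::'a::real_normed_vector \<Rightarrow>\<^sub>L real. blinfun_apply g x)"
  by (rule linearI) (auto simp: plus_blinfun.rep_eq scaleR_blinfun.rep_eq)

lemma finite_chain_min:
  fixes C :: "'b set set"
  assumes "finite C" "C \<noteq> {}" "\<forall>a\<in>C. \<forall>b\<in>C. a \<subseteq> b \<or> b \<subseteq> a"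
  shows "\<exists>m\<in>C. \<forall>a\<in>C. m \<subseteq> a"
  using assms
proof (induction C rule: finite_ne_induct)
  case (singleton x) then show ?case by blast
next
  case (insert x F)
  then obtain m where m: "m \<in> F" "\<forall>a\<in>F. m \<subseteq> a" by blast
  show ?case
  proof (cases "x \<subseteq> m")
    case True then show ?thesis using m by blast
  next
    case False then have "m \<subseteq> x" using insert.prems m(1) by blast
    then show ?thesis using m by blast
  qed
qed



lemma closed_image_filter:
  fixes F :: "('a::real_normed_vector \<Rightarrow>\<^sub>L real) set"
  assumes "closedin PT (blinfun_apply ` F)"
  shows "closedin PT (blinfun_apply ` {g\<in>F. blinfun_apply g x = c})"
proof -
  have "blinfun_apply ` {g\<in>F. blinfun_apply g x = c} = blinfun_apply ` F \<inter> {\<phi>. \<phi> x \<in> {c}}"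
    by auto
  then show ?thesis
    using closedin_Int[OF assms closedin_PT_pre[OF cont_eval closed_singleton]] by metis
qed

lemma ext_exists:
  fixes z :: "'a::real_normed_vector"
  shows "\<exists>e\<in>(ext_dual_ball :: ('a \<Rightarrow>\<^sub>L real) set). blinfun_apply e z = norm z"
proof -
  define B where "B = cball (0::'a \<Rightarrow>\<^sub>L real) 1"
  define A where "A = {F. F face_of B \<and> F \<noteq> {} \<and> closedin PT (blinfun_apply ` F) \<and>
                         (\<forall>g\<in>F. blinfun_apply g z = norm z)}"
  have cvB: "convex B" by (simp add: B_def)
  have JB: "blinfun_apply ` B = KK" unfolding B_def by (rule image_ball_KK)
  have "\<exists>M\<in>A. \<forall>a\<in>A. a \<le> M \<longrightarrow> a = M"
  proof (rule zorn_min)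
    define F0 where "F0 = {g\<in>B. blinfun_apply g z = norm z}"
    have "F0 face_of B" unfolding F0_def
      by (rule exposed_face[OF cvB linear_eval]) (auto simp: B_def eval_le_norm)
    moreover have "F0 \<noteq> {}"
      using hahn_banach_norming[of z] unfolding F0_def B_def by auto
    moreover have "closedin PT (blinfun_apply ` F0)"
      unfolding F0_def by (rule closed_image_filter) (simp add: JB closedin_KK)
    ultimately have "F0 \<in> A" unfolding A_def F0_def by auto
    then show "A \<noteq> {}" by blast
  next
    fix C assume C: "C \<subseteq> A" "C \<noteq> {}" "\<forall>a\<in>C. \<forall>b\<in>C. a \<le> b \<or> b \<le> a"
    have CA: "F face_of B" "F \<noteq> {}" "closedin PT (blinfun_apply ` F)" "\<forall>g\<in>F. blinfun_apply g z = norm z"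
      if "F \<in> C" for F using C(1) that unfolding A_def by auto
    obtain F1 where F1: "F1 \<in> C" using C(2) by blast
    have img: "blinfun_apply ` (\<Inter>C) = (\<Inter>F\<in>C. blinfun_apply ` F)"
      using image_INT[of blinfun_apply UNIV C "\<lambda>F. F" F1] inj_bapply F1 by simp
    have "\<Inter>C face_of B" by (rule face_of_Inter[OF C(2)]) (use CA in blast)
    moreover have "closedin PT (blinfun_apply ` (\<Inter>C))"
      unfolding img by (rule closedin_Inter) (use C(2) CA in auto)
    moreover have "\<Inter>C \<noteq> {}"
    proof -
      let ?U = "(\<lambda>F. blinfun_apply ` F) ` C"
      have fip: "KK \<inter> \<Inter>\<F> \<noteq> {}" if fin: "finite \<F>" and sub: "\<F> \<subseteq> ?U" for \<F>
      proof (cases "\<F> = {}")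
        case True
        have "(0::'a \<Rightarrow>\<^sub>L real) \<in> B" by (simp add: B_def)
        then have "blinfun_apply (0::'a \<Rightarrow>\<^sub>L real) \<in> KK" using JB by blast
        then show ?thesis using True by blast
      next
        case False
        obtain C' where C': "C' \<subseteq> C" "finite C'" "\<F> = (\<lambda>F. blinfun_apply ` F) ` C'"
          using finite_subset_image[OF fin sub] by blast
        then have "C' \<noteq> {}" using False by blast
        moreover have "\<forall>a\<in>C'. \<forall>b\<in>C'. a \<subseteq> b \<or> b \<subseteq> a" using C'(1) C(3) by blast
        ultimately obtain m where m: "m \<in> C'" "\<forall>a\<in>C'. m \<subseteq> a"
          using finite_chain_min[OF C'(2)] by blast
        then obtain g where g: "g \<in> m" using CA C'(1) by blast
        have "g \<in> B" using CA(1) m(1) C'(1) g face_of_imp_subset by blast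
        then have "blinfun_apply g \<in> KK" using JB by blast
        moreover have "blinfun_apply g \<in> \<Inter>\<F>" using C'(3) m g by blast
        ultimately show ?thesis by blast
      qed
      have "KK \<inter> \<Inter>?U \<noteq> {}"
      proof (rule compactin_KK[unfolded compactin_fip, THEN conjunct2, rule_format, of ?U], rule conjI)
        show "\<forall>C\<in>?U. closedin PT C" using CA(3) by blast
        show "\<forall>\<F>. finite \<F> \<and> \<F> \<subseteq> ?U \<longrightarrow> KK \<inter> \<Inter> \<F> \<noteq> {}" using fip by blast
      qed
      then obtain \<phi> where \<phi>: "\<phi> \<in> \<Inter>?U" by blast
      have "blinfun_apply ` F1 \<in> ?U" using F1 by (rule imageI)
      with \<phi> have "\<phi> \<in> blinfun_apply ` F1" by (rule InterD)
      then obtain g where g: "g \<in> F1" "\<phi> = blinfun_apply g" by (auto simp del: blinfun_apply_inject)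
      have "g \<in> F" if "F \<in> C" for F
      proof -
        have "blinfun_apply ` F \<in> ?U" using that by (rule imageI)
        with \<phi> have "\<phi> \<in> blinfun_apply ` F" by (rule InterD)
        then obtain g' where "g' \<in> F" "\<phi> = blinfun_apply g'" by (auto simp del: blinfun_apply_inject)
        then show ?thesis using g(2) by (simp add: blinfun_apply_inject)
      qed
      then show ?thesis by blast
    qed
    moreover have "\<forall>g\<in>\<Inter>C. blinfun_apply g z = norm z" using CA(4) F1 by blast
    ultimately have "\<Inter>C \<in> A" unfolding A_def by blast
    then show "\<exists>u\<in>A. \<forall>a\<in>C. u \<le> a" by blast
  qed
  then obtain M where M: "M \<in> A" and Mmin: "\<forall>a\<in>A. a \<subseteq> M \<longrightarrow> a = M" by auto
  have MB: "M face_of B" and Mne: "M \<noteq> {}" and Mc: "closedin PT (blinfun_apply ` M)"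
    and Mz: "\<forall>g\<in>M. blinfun_apply g z = norm z" using M unfolding A_def by auto
  have single: "g1 = g2" if g1: "g1 \<in> M" and g2: "g2 \<in> M" for g1 g2
  proof (rule ccontr)
    assume "g1 \<noteq> g2"
    then obtain x where x: "blinfun_apply g1 x \<noteq> blinfun_apply g2 x" by (meson blinfun_eqI)
    have "blinfun_apply ` M \<subseteq> KK" using MB face_of_imp_subset JB by blast
    then have "blinfun_apply ` M \<inter> KK = blinfun_apply ` M" by blast
    then have "compactin PT (blinfun_apply ` M)"
      using closed_Int_compactin[OF Mc compactin_KK] by simp
    then have "compactin euclideanreal ((\<lambda>\<phi>. \<phi> x) ` blinfun_apply ` M)"
      by (rule image_compactin[OF _ cont_eval])
    then have cpt: "compact ((\<lambda>g. blinfun_apply g x) ` M)" by (simp add: image_image)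
    obtain m where m: "m \<in> (\<lambda>g. blinfun_apply g x) ` M" "\<forall>t\<in>(\<lambda>g. blinfun_apply g x) ` M. t \<le> m"
      using compact_attains_sup[OF cpt] Mne by blast
    define M' where "M' = {g\<in>M. blinfun_apply g x = m}"
    have "M' face_of M" unfolding M'_def
      by (rule exposed_face[OF face_of_imp_convex[OF MB] linear_eval]) (use m in auto)
    then have "M' face_of B" using MB face_of_trans by blast
    moreover have "M' \<noteq> {}" using m(1) unfolding M'_def by auto
    moreover have "closedin PT (blinfun_apply ` M')" unfolding M'_def by (rule closed_image_filter[OF Mc])
    moreover have "\<forall>g\<in>M'. blinfun_apply g z = norm z" using Mz unfolding M'_def by auto
    ultimately have "M' \<in> A" unfolding A_def by blast
    moreover have "M' \<subseteq> M" unfolding M'_def by blast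
    ultimately have "M' = M" using Mmin by blast
    then have "blinfun_apply g1 x = m" "blinfun_apply g2 x = m" using g1 g2 unfolding M'_def by blast+
    then show False using x by simp
  qed
  obtain e where e: "e \<in> M" using Mne by blast
  then have "M = {e}" using single by blast
  then have "{e} face_of B" using MB by simp
  then have "e extreme_point_of B" by (simp add: face_of_singleton)
  then have "e \<in> ext_dual_ball" unfolding ext_dual_ball_def B_def by simp
  then show ?thesis using Mz e by blast
qed



lemma ker_not_fin:
  fixes Fs :: "('a::real_normed_vector \<Rightarrow>\<^sub>L real) set"
  assumes inf: "\<not> (\<exists>B :: 'a set. finite B \<and> span B = UNIV)" and fin: "finite Fs"
  shows "\<not> (\<exists>B. finite B \<and> {w. \<forall>l\<in>Fs. blinfun_apply l w = 0} \<subseteq> span B)"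
  using fin
proof (induction Fs rule: finite_induct)
  case empty
  show ?case
  proof
    assume "\<exists>B. finite B \<and> {w::'a. \<forall>l\<in>{}. blinfun_apply l w = 0} \<subseteq> span B"
    then obtain B :: "'a set" where "finite B" "UNIV \<subseteq> span B" by auto
    then show False using inf by blast
  qed
next
  case (insert l Fs)
  show ?case
  proof
    assume "\<exists>B. finite B \<and> {w. \<forall>l'\<in>insert l Fs. blinfun_apply l' w = 0} \<subseteq> span B"
    then obtain B where B: "finite B" "{w. \<forall>l'\<in>insert l Fs. blinfun_apply l' w = 0} \<subseteq> span B" by blast
    show False
    proof (cases "\<exists>v. (\<forall>l'\<in>Fs. blinfun_apply l' v = 0) \<and> blinfun_apply l v \<noteq> 0")
      case True
      then obtain v where v: "\<forall>l'\<in>Fs. blinfun_apply l' v = 0" "blinfun_apply l v \<noteq> 0" by blast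
      have "{w. \<forall>l'\<in>Fs. blinfun_apply l' w = 0} \<subseteq> span (insert v B)"
      proof
        fix w assume w: "w \<in> {w. \<forall>l'\<in>Fs. blinfun_apply l' w = 0}"
        define c where "c = blinfun_apply l w / blinfun_apply l v"
        define w' where "w' = w - c *\<^sub>R v"
        have "\<forall>l'\<in>insert l Fs. blinfun_apply l' w' = 0"
          using w v unfolding w'_def c_def by (auto simp: blinfun.diff_right blinfun.scaleR_right)
        then have "w' \<in> span B" using B(2) by blast
        then have "w' \<in> span (insert v B)" using span_mono[of B "insert v B"] by blast
        moreover have "c *\<^sub>R v \<in> span (insert v B)" by (simp add: span_base span_scale)
        ultimately have "w' + c *\<^sub>R v \<in> span (insert v B)" by (rule span_add)
        then show "w \<in> span (insert v B)" unfolding w'_def by simp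
      qed
      then show False using insert.IH B(1) by blast
    next
      case False
      then have "{w. \<forall>l'\<in>Fs. blinfun_apply l' w = 0} \<subseteq> span B" using B(2) by auto
      then show False using insert.IH B(1) by blast
    qed
  qed
qed

lemma common_kernel:
  fixes Fs :: "('a::real_normed_vector \<Rightarrow>\<^sub>L real) set"
  assumes inf: "\<not> (\<exists>B :: 'a set. finite B \<and> span B = UNIV)" and fin: "finite Fs"
  shows "\<exists>y. y \<noteq> 0 \<and> (\<forall>l\<in>Fs. blinfun_apply l y = 0)"
proof (rule ccontr)
  assume "\<not> ?thesis"
  then have "{w. \<forall>l\<in>Fs. blinfun_apply l w = 0} \<subseteq> span {}" by auto
  then show False using ker_not_fin[OF inf fin] by blast
qed

lemma slice_point:
  fixes f :: "'a::real_normed_vector \<Rightarrow>\<^sub>L real"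
  assumes a: "0 < \<alpha>"
  shows "\<exists>x. norm x \<le> 1 \<and> norm f - \<alpha> < blinfun_apply f x"
proof (rule ccontr)
  assume "\<not> ?thesis"
  then have h: "norm x \<le> 1 \<Longrightarrow> blinfun_apply f x \<le> norm f - \<alpha>" for x by force
  have n0: "0 \<le> norm f - \<alpha>" using h[of 0] by simp
  have "norm (blinfun_apply f x) \<le> (norm f - \<alpha>) * norm x" for x
  proof (cases "x = 0")
    case True then show ?thesis by simp
  next
    case False
    define u where "u = x /\<^sub>R norm x"
    have nu: "norm u \<le> 1" "norm (- u) \<le> 1" using False by (simp_all add: u_def)
    have "blinfun_apply f u \<le> norm f - \<alpha>" "- blinfun_apply f u \<le> norm f - \<alpha>"
      using h[OF nu(1)] h[OF nu(2)] by (simp_all add: blinfun.minus_right)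
    then have "\<bar>blinfun_apply f u\<bar> \<le> norm f - \<alpha>" by linarith
    moreover have "blinfun_apply f x = norm x * blinfun_apply f u"
      using False by (simp add: u_def blinfun.scaleR_right)
    ultimately show ?thesis
      by (simp add: abs_mult mult.commute mult_left_mono)
  qed
  then have "norm f \<le> norm f - \<alpha>" by (rule norm_blinfun_bound[OF n0])
  then show False using a by simp
qed



theorem proposition2p2:
  assumes inf_dim: "\<not> (\<exists>B :: 'a::banach set. finite B \<and> span B = UNIV)"
    and poly: "II_polyhedral TYPE('a)"
  shows "\<exists>\<delta>>0. \<forall>(f :: 'a \<Rightarrow>\<^sub>L real) (\<alpha>::real).
           f \<noteq> 0 \<and> \<alpha> > 0 \<longrightarrow> diameter (slice f \<alpha>) \<ge> \<delta>"
proof -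
  obtain r :: real where r0: "0 < r" and r1: "r < 1"
    and rD: "weak_star_topology derived_set_of (ext_dual_ball :: ('a \<Rightarrow>\<^sub>L real) set) \<subseteq> cball 0 r"
    using poly unfolding II_polyhedral_def by blast
  show ?thesis
  proof (intro exI[of _ "1 - r"] conjI allI impI)
    show "0 < 1 - r" using r1 by simp
    fix f :: "'a \<Rightarrow>\<^sub>L real" and \<alpha> :: real
    assume fa: "f \<noteq> 0 \<and> 0 < \<alpha>"
    obtain x where x1: "norm x \<le> 1" and xf: "norm f - \<alpha> < blinfun_apply f x"
      using slice_point fa by blast
    define s where "s = (1 + r) / 2"
    define t where "t = (1 - r) / 2"
    have rs: "r < s" and st: "s + t = 1" and t0: "0 < t" using r1 by (auto simp: s_def t_def field_simps)
    define Fs where "Fs = insert f {e \<in> (ext_dual_ball :: ('a \<Rightarrow>\<^sub>L real) set). s \<le> blinfun_apply e x}"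
    have "finite Fs" unfolding Fs_def using finite_big[OF rD x1 rs] by simp
    then obtain y where y0: "y \<noteq> 0" and yk: "\<forall>l\<in>Fs. blinfun_apply l y = 0"
      using common_kernel[OF inf_dim] by blast
    define u where "u = y /\<^sub>R norm y"
    have nu: "norm u = 1" using y0 by (simp add: u_def)
    have uk: "blinfun_apply l u = 0" if "l \<in> Fs" for l
      using yk that by (simp add: u_def blinfun.scaleR_right)
    have inS: "x + c *\<^sub>R u \<in> slice f \<alpha>" if c: "\<bar>c\<bar> \<le> t" for c
    proof -
      let ?p = "x + c *\<^sub>R u"
      obtain e where e: "e \<in> ext_dual_ball" "blinfun_apply e ?p = norm ?p"
        using ext_exists[of ?p] by blast
      have ne: "norm e \<le> 1" using e(1) ext_sub_ball by auto
      have ep: "blinfun_apply e ?p = blinfun_apply e x + c * blinfun_apply e u"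
        by (simp add: blinfun.add_right blinfun.scaleR_right)
      have "norm ?p \<le> 1"
      proof (cases "s \<le> blinfun_apply e x")
        case True
        then have "e \<in> Fs" using e(1) unfolding Fs_def by blast
        then have "blinfun_apply e ?p = blinfun_apply e x" using ep uk by simp
        also have "\<dots> \<le> norm x" using eval_le_norm[OF ne] .
        finally show ?thesis using e(2) x1 by simp
      next
        case False
        have "\<bar>blinfun_apply e u\<bar> \<le> 1" using eval_le_norm[OF ne, of u] eval_le_norm[OF ne, of "- u"] nu
          by (simp add: blinfun.minus_right)
        have "c * blinfun_apply e u \<le> \<bar>c * blinfun_apply e u\<bar>" by (rule abs_ge_self)
        also have "\<dots> = \<bar>c\<bar> * \<bar>blinfun_apply e u\<bar>" by (rule abs_mult)
        also have "\<dots> \<le> t * 1" by (rule mult_mono) (use c t0 \<open>\<bar>blinfun_apply e u\<bar> \<le> 1\<close> in auto)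
        finally have "c * blinfun_apply e u \<le> t" by simp
        then show ?thesis using e(2) ep False st by linarith
      qed
      moreover have "blinfun_apply f ?p = blinfun_apply f x"
      proof -
        have "f \<in> Fs" unfolding Fs_def by simp
        then show ?thesis using uk by (simp add: blinfun.add_right blinfun.scaleR_right)
      qed
      ultimately show ?thesis using xf unfolding slice_def by simp
    qed
    have p1: "x + t *\<^sub>R u \<in> slice f \<alpha>" using inS[of t] t0 by simp
    have p2: "x + (- t) *\<^sub>R u \<in> slice f \<alpha>" using inS[of "- t"] t0 by simp
    have bd: "bounded (slice f \<alpha>)"
    proof -
      have "slice f \<alpha> \<subseteq> cball 0 1" unfolding slice_def by blast
      then show ?thesis by (rule bounded_subset[OF bounded_cball])
    qed
    have e0: "(x + t *\<^sub>R u) - (x + (- t) *\<^sub>R u) = t *\<^sub>R u + t *\<^sub>R u" by simp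
    have e1: "t *\<^sub>R u + t *\<^sub>R u = (2 * t) *\<^sub>R u" by (metis scaleR_2 scaleR_scaleR)
    have e2: "norm ((2 * t) *\<^sub>R u) = 2 * t" using nu t0 by simp
    have e3: "2 * t = 1 - r" by (simp add: t_def)
    have "dist (x + t *\<^sub>R u) (x + (- t) *\<^sub>R u) = norm ((2 * t) *\<^sub>R u)"
      unfolding dist_norm e0 e1 by (rule refl)
    then have "dist (x + t *\<^sub>R u) (x + (- t) *\<^sub>R u) = 1 - r" using e2 e3 by simp
    then show "1 - r \<le> diameter (slice f \<alpha>)"
      using diameter_bounded_bound[OF bd p1 p2] by simp
  qed
qed

end
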